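(* Let $Z,X$ be real vector spaces, $\Omega\subseteq Z$ nonempty, $f:Z\to X$, and let $K\subseteq X$ be a nontrivial convex cone with a convex base $B$. Consider the vector optimization problem of minimizing $f$ over $\Omega$ with respect to $K$. Then: (i) every BeV proper efficient solution is an efficient solution; (ii) every HuV proper efficient solution is a BeV proper efficient solution, and the converse holds if $f(\Omega)+K$ is convex; (iii) every VP solution is a VH solution; (iv) every VH solution is a BeV proper efficient solution.
   Context: $K$ nontrivial means $K\neq\{0\}$ and $K\neq X$. A base of $K$ is a set $B$ with $0\notin B$ such that each $k\in K\setminus\{0\}$ has a unique representation $k=tb$ with $t>0$, $b\in B$. For $A\subseteq X$: $cone(A)=\{ta: t\ge0, a\in A\}$; $conv(A)$ is the convex hull; $cor(A):=\{x\in A:\ \forall x'\in X\ \exists \lambda'>0 \text{ with } x+\lambda x'\in A\ \forall\lambda\in[0,\lambda']\}$; $vcl(A):=\{b\in X:\ \exists x\in X \text{ such that } \forall\lambda'>0\ \exists\lambda\in[0,\lambda'] \text{ with } b+\lambda x\in A\}$. For a cone $C\subseteq X$, $x_0\in\Omega$ is efficient with respect to $C$ if $(f(\Omega)-f(x_0))\cap(-C)=\{0\}$; an efficient solution means efficient with respect to $K$. $x_0\in\Omega$ is: a VP solution if there is a convex set $V$ with $0\in V$, $cor(V)=V$, $cone(B+V)\neq X$, such that $x_0$ is efficient with respect to $cone(B+V)$; a VH solution if there is a pointed convex cone $C$ ($C\cap(-C)=\{0\}$) with $K\setminus\{0\}\subseteq cor(C)$ such that $x_0$ is efficient with respect to $C$;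 a HuV proper efficient solution if $vcl\big(conv\big(cone((f(\Omega)-f(x_0))\cup K)\big)\big)\cap(-K)=\{0\}$; a BeV proper efficient solution if $vcl\big(cone(f(\Omega)-f(x_0)+K)\big)\cap(-K)=\{0\}$. *)

theory Defs
  imports "HOL-Analysis.Analysis"
begin

text \<open>cone(A) = {t a : t \<ge> 0, a \<in> A} is the library's "cone hull A" (lemma cone_hull_expl);
  conv(A) is "convex hull A".\<close>

definition cor :: "'a::real_vector set \<Rightarrow> 'a set" where
  "cor A = {x \<in> A. \<forall>x'. \<exists>l'>0. \<forall>l\<in>{0..l'}. x + l *\<^sub>R x' \<in> A}"

definition vcl :: "'a::real_vector set \<Rightarrow> 'a set" where
  "vcl A = {b. \<exists>x. \<forall>l'>0. \<exists>l\<in>{0..l'}. b + l *\<^sub>R x \<in> A}"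

definition is_base :: "'a::real_vector set \<Rightarrow> 'a set \<Rightarrow> bool" where
  "is_base K B \<longleftrightarrow> 0 \<notin> B \<and>
     (\<forall>k\<in>K - {0}. \<exists>!p. fst p > 0 \<and> snd p \<in> B \<and> k = fst p *\<^sub>R snd p)"

definition nontrivial_cone :: "'a::real_vector set \<Rightarrow> bool" where
  "nontrivial_cone K \<longleftrightarrow> K \<noteq> {0} \<and> K \<noteq> UNIV"

definition img_shift :: "('z \<Rightarrow> 'x::real_vector) \<Rightarrow> 'z set \<Rightarrow> 'z \<Rightarrow> 'x set" where
  "img_shift f \<Omega> x0 = {f x - f x0 | x. x \<in> \<Omega>}"

definition efficient_wrt ::
  "('z \<Rightarrow> 'x::real_vector) \<Rightarrow> 'z set \<Rightarrow> 'x set \<Rightarrow> 'z \<Rightarrow> bool" where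
  "efficient_wrt f \<Omega> C x0 \<longleftrightarrow> x0 \<in> \<Omega> \<and> img_shift f \<Omega> x0 \<inter> uminus ` C = {0}"

definition VP_solution ::
  "('z \<Rightarrow> 'x::real_vector) \<Rightarrow> 'z set \<Rightarrow> 'x set \<Rightarrow> 'z \<Rightarrow> bool" where
  "VP_solution f \<Omega> B x0 \<longleftrightarrow> x0 \<in> \<Omega> \<and>
     (\<exists>V. convex V \<and> 0 \<in> V \<and> cor V = V \<and>
        cone hull {b + v | b v. b \<in> B \<and> v \<in> V} \<noteq> UNIV \<and>
        efficient_wrt f \<Omega> (cone hull {b + v | b v. b \<in> B \<and> v \<in> V}) x0)"

definition VH_solution ::
  "('z \<Rightarrow> 'x::real_vector) \<Rightarrow> 'z set \<Rightarrow> 'x set \<Rightarrow> 'z \<Rightarrow> bool" where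
  "VH_solution f \<Omega> K x0 \<longleftrightarrow> x0 \<in> \<Omega> \<and>
     (\<exists>C. convex C \<and> cone C \<and> C \<inter> uminus ` C = {0} \<and> K - {0} \<subseteq> cor C \<and>
        efficient_wrt f \<Omega> C x0)"

definition HuV_proper ::
  "('z \<Rightarrow> 'x::real_vector) \<Rightarrow> 'z set \<Rightarrow> 'x set \<Rightarrow> 'z \<Rightarrow> bool" where
  "HuV_proper f \<Omega> K x0 \<longleftrightarrow> x0 \<in> \<Omega> \<and>
     vcl (convex hull (cone hull (img_shift f \<Omega> x0 \<union> K))) \<inter> uminus ` K = {0}"

definition BeV_proper ::
  "('z \<Rightarrow> 'x::real_vector) \<Rightarrow> 'z set \<Rightarrow> 'x set \<Rightarrow> 'z \<Rightarrow> bool" where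
  "BeV_proper f \<Omega> K x0 \<longleftrightarrow> x0 \<in> \<Omega> \<and>
     vcl (cone hull {y + k | y k. y \<in> img_shift f \<Omega> x0 \<and> k \<in> K}) \<inter> uminus ` K = {0}"

end

theory Submission
  imports Defs
begin

lemma vcl_mono: "A \<subseteq> A' \<Longrightarrow> vcl A \<subseteq> vcl A'"
  unfolding vcl_def by blast

lemma vcl_sup: "A \<subseteq> vcl A"
  unfolding vcl_def by (auto intro!: exI[of _ 0])

lemma part1:
  fixes f :: "'z::real_vector \<Rightarrow> 'x::real_vector"
  assumes "cone K" "K \<noteq> {}" "BeV_proper f \<Omega> K x0"
  shows "efficient_wrt f \<Omega> K x0"
proof -
  have x0: "x0 \<in> \<Omega>" and H: "vcl (cone hull {y + k | y k. y \<in> img_shift f \<Omega> x0 \<and> k \<in> K}) \<inter> uminus ` K = {0}"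
    using assms(3) unfolding BeV_proper_def by auto
  have K0: "0 \<in> K" using assms(1,2) cone_contains_0 by blast
  have "img_shift f \<Omega> x0 \<subseteq> {y + k | y k. y \<in> img_shift f \<Omega> x0 \<and> k \<in> K}"
    using K0 by force
  also have "\<dots> \<subseteq> cone hull {y + k | y k. y \<in> img_shift f \<Omega> x0 \<and> k \<in> K}"
    by (rule hull_subset)
  also have "\<dots> \<subseteq> vcl (cone hull {y + k | y k. y \<in> img_shift f \<Omega> x0 \<and> k \<in> K})"
    by (rule vcl_sup)
  finally have "img_shift f \<Omega> x0 \<inter> uminus ` K \<subseteq> {0}" using H by blast
  moreover have "0 \<in> img_shift f \<Omega> x0" using x0 unfolding img_shift_def by force
  moreover have "0 \<in> uminus ` K" using K0 by force
  ultimately show ?thesis using x0 unfolding efficient_wrt_def by blast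
qed

lemma part2:
  fixes f :: "'z::real_vector \<Rightarrow> 'x::real_vector"
  assumes "cone K" "K \<noteq> {}" "HuV_proper f \<Omega> K x0"
  shows "BeV_proper f \<Omega> K x0"
proof -
  let ?I = "img_shift f \<Omega> x0"
  let ?S = "cone hull {y + k | y k. y \<in> ?I \<and> k \<in> K}"
  have x0: "x0 \<in> \<Omega>" and H: "vcl (convex hull (cone hull (?I \<union> K))) \<inter> uminus ` K = {0}"
    using assms(3) unfolding HuV_proper_def by auto
  have K0: "0 \<in> K" using assms(1,2) cone_contains_0 by blast
  have sub: "?S \<subseteq> convex hull (cone hull (?I \<union> K))"
  proof
    fix z assume "z \<in> ?S"
    then obtain c y k where z: "z = c *\<^sub>R (y + k)" "c \<ge> 0" "y \<in> ?I" "k \<in> K"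
      unfolding cone_hull_expl by blast
    have a: "(2*c) *\<^sub>R y \<in> cone hull (?I \<union> K)" using z by (intro mem_cone_hull) auto
    have b: "(2*c) *\<^sub>R k \<in> cone hull (?I \<union> K)" using z by (intro mem_cone_hull) auto
    have "(1/2) *\<^sub>R ((2*c) *\<^sub>R y) + (1/2) *\<^sub>R ((2*c) *\<^sub>R k) \<in> convex hull (cone hull (?I \<union> K))"
      by (rule convexD[OF convex_convex_hull]) (use a b in \<open>auto intro: hull_inc\<close>)
    moreover have "(1/2) *\<^sub>R ((2*c) *\<^sub>R y) + (1/2) *\<^sub>R ((2*c) *\<^sub>R k) = z"
      using z by (simp add: scaleR_add_right)
    ultimately show "z \<in> convex hull (cone hull (?I \<union> K))" by simp
  qed
  have "vcl ?S \<inter> uminus ` K \<subseteq> {0}" using H vcl_mono[OF sub] by blast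
  moreover have "0 \<in> ?S"
  proof -
    have "0 \<in> ?I" using x0 unfolding img_shift_def by force
    then have "(0::'x) + 0 \<in> {y + k | y k. y \<in> ?I \<and> k \<in> K}" using K0 by blast
    then show ?thesis using cone_hull_contains_0 by fastforce
  qed
  moreover have "0 \<in> uminus ` K" using K0 by force
  ultimately show ?thesis using x0 vcl_sup unfolding BeV_proper_def by blast
qed

lemma part3:
  fixes f :: "'z::real_vector \<Rightarrow> 'x::real_vector"
  assumes "cone K" "K \<noteq> {}" "convex {y + k | y k. y \<in> f ` \<Omega> \<and> k \<in> K}"
    "BeV_proper f \<Omega> K x0"
  shows "HuV_proper f \<Omega> K x0"
proof -
  let ?I = "img_shift f \<Omega> x0"
  let ?D = "{y + k | y k. y \<in> ?I \<and> k \<in> K}"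
  let ?S = "cone hull ?D"
  have x0: "x0 \<in> \<Omega>" and H: "vcl ?S \<inter> uminus ` K = {0}"
    using assms(4) unfolding BeV_proper_def by auto
  have K0: "0 \<in> K" using assms(1,2) cone_contains_0 by blast
  have "?D = (\<lambda>b. b - f x0) ` {y + k | y k. y \<in> f ` \<Omega> \<and> k \<in> K}"
  proof (rule set_eqI, rule iffI)
    fix z assume "z \<in> ?D"
    then obtain x k where xk: "x \<in> \<Omega>" "k \<in> K" "z = (f x - f x0) + k"
      unfolding img_shift_def by blast
    then have "f x + k \<in> {y + k | y k. y \<in> f ` \<Omega> \<and> k \<in> K}" by blast
    moreover have "z = (f x + k) - f x0" using xk by (simp add: algebra_simps)
    ultimately show "z \<in> (\<lambda>b. b - f x0) ` {y + k | y k. y \<in> f ` \<Omega> \<and> k \<in> K}" by blast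
  next
    fix z assume "z \<in> (\<lambda>b. b - f x0) ` {y + k | y k. y \<in> f ` \<Omega> \<and> k \<in> K}"
    then obtain x k where xk: "x \<in> \<Omega>" "k \<in> K" "z = (f x + k) - f x0" by blast
    then have "z = (f x - f x0) + k" by (simp add: algebra_simps)
    moreover have "f x - f x0 \<in> ?I" using xk unfolding img_shift_def by blast
    ultimately show "z \<in> ?D" using xk by blast
  qed
  then have "convex ?D" using convex_translation_subtract[OF assms(3)] by simp
  then have cS: "convex ?S" by (rule convex_cone_hull)
  have I0: "0 \<in> ?I" using x0 unfolding img_shift_def by force
  have "?I \<union> K \<subseteq> ?D"
  proof
    fix z assume "z \<in> ?I \<union> K"
    then show "z \<in> ?D"
    proof
      assume "z \<in> ?I" then show ?thesis using K0 by force
    next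
      assume "z \<in> K" then show ?thesis using I0 by force
    qed
  qed
  then have "cone hull (?I \<union> K) \<subseteq> ?S" by (rule hull_mono)
  then have "convex hull (cone hull (?I \<union> K)) \<subseteq> ?S"
    using cS by (simp add: hull_minimal)
  then have "vcl (convex hull (cone hull (?I \<union> K))) \<inter> uminus ` K \<subseteq> {0}"
    using H vcl_mono by blast
  moreover have "0 \<in> convex hull (cone hull (?I \<union> K))"
    using I0 hull_subset[of "?I \<union> K" cone] hull_subset[of "cone hull (?I \<union> K)" convex] by blast
  moreover have "0 \<in> uminus ` K" using K0 by force
  ultimately show ?thesis using x0 vcl_sup unfolding HuV_proper_def by blast
qed



lemma part4:
  fixes f :: "'z::real_vector \<Rightarrow> 'x::real_vector"
  assumes "is_base K B" "convex B" "VP_solution f \<Omega> B x0"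
  shows "VH_solution f \<Omega> K x0"
proof -
  obtain V where V: "convex V" "0 \<in> V" "cor V = V"
    and ne: "cone hull {b + v | b v. b \<in> B \<and> v \<in> V} \<noteq> UNIV"
    and eff: "efficient_wrt f \<Omega> (cone hull {b + v | b v. b \<in> B \<and> v \<in> V}) x0"
    and x0: "x0 \<in> \<Omega>"
    using assms(3) unfolding VP_solution_def by blast
  define D where "D = {b + v | b v. b \<in> B \<and> v \<in> V}"
  define C where "C = cone hull D"
  have Deq: "D = (\<Union>x\<in>B. \<Union>y\<in>V. {x + y})" unfolding D_def by blast
  have cD: "convex D" unfolding Deq by (rule convex_sums[OF assms(2) V(1)])
  have cC: "convex C" unfolding C_def by (rule convex_cone_hull[OF cD])
  have coC: "cone C" unfolding C_def by (rule cone_cone_hull)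
  have effC: "efficient_wrt f \<Omega> C x0" using eff unfolding C_def D_def .
  then have "0 \<in> uminus ` C" unfolding efficient_wrt_def by blast
  then have C0: "0 \<in> C" by force
  have core0: "\<exists>l'>0. \<forall>l\<in>{0..l'}. l *\<^sub>R x' \<in> V" for x'
  proof -
    have "0 \<in> cor V" using V(2,3) by simp
    then show ?thesis unfolding cor_def by simp
  qed
  have D0: "0 \<notin> D"
  proof
    assume "0 \<in> D"
    then obtain b v where bv: "b \<in> B" "v \<in> V" "0 = b + v" unfolding D_def by blast
    have "x \<in> C" for x
    proof -
      have "v \<in> cor V" using bv V(3) by simp
      then obtain l' where l': "l' > 0" "\<forall>l\<in>{0..l'}. v + l *\<^sub>R x \<in> V"
        unfolding cor_def by blast
      then have "v + l' *\<^sub>R x \<in> V" by auto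
      then have "b + (v + l' *\<^sub>R x) \<in> D" using bv unfolding D_def by blast
      moreover have "b + (v + l' *\<^sub>R x) = l' *\<^sub>R x" using bv by (simp add: algebra_simps)
      ultimately have "(1/l') *\<^sub>R (l' *\<^sub>R x) \<in> C" unfolding C_def
        using l'(1) by (intro mem_cone_hull) auto
      then show ?thesis using l'(1) by simp
    qed
    then show False using ne unfolding C_def D_def by blast
  qed
  have pointed: "C \<inter> uminus ` C = {0}"
  proof (rule set_eqI, rule iffI)
    fix c assume "c \<in> C \<inter> uminus ` C"
    then have c1: "c \<in> C" and c2: "-c \<in> C" by force+
    show "c \<in> {0}"
    proof (rule ccontr)
      assume cn: "c \<notin> {0}"
      obtain s d1 where 1: "c = s *\<^sub>R d1" "s \<ge> 0" "d1 \<in> D" using c1 unfolding C_def cone_hull_expl by blast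
      obtain r d2 where 2: "-c = r *\<^sub>R d2" "r \<ge> 0" "d2 \<in> D" using c2 unfolding C_def cone_hull_expl by blast
      have s: "s > 0" using 1 cn by (cases "s = 0") auto
      have r: "r > 0" using 2 cn by (cases "r = 0") auto
      have "(s/(s+r)) *\<^sub>R d1 + (r/(s+r)) *\<^sub>R d2 \<in> D"
      proof (rule convexD[OF cD])
        show "s/(s+r) + r/(s+r) = 1" using s r by (simp add: add_divide_distrib[symmetric])
      qed (use s r 1 2 in auto)
      moreover have "(s/(s+r)) *\<^sub>R d1 + (r/(s+r)) *\<^sub>R d2 = (1/(s+r)) *\<^sub>R (c + - c)"
        using 1 2 by (simp add: scaleR_add_right)
      ultimately show False using D0 by simp
    qed
  next
    fix c :: 'x assume "c \<in> {0}" then show "c \<in> C \<inter> uminus ` C" using C0 by force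
  qed
  have core: "K - {0} \<subseteq> cor C"
  proof
    fix k assume k: "k \<in> K - {0}"
    have "\<exists>!p. fst p > 0 \<and> snd p \<in> B \<and> k = fst p *\<^sub>R snd p"
      using assms(1) k unfolding is_base_def by blast
    then obtain p where "fst p > 0 \<and> snd p \<in> B \<and> k = fst p *\<^sub>R snd p" by blast
    then obtain t b where tb: "t > 0" "b \<in> B" "k = t *\<^sub>R b" by blast
    have "b + 0 \<in> D" using tb V(2) unfolding D_def by blast
    then have "t *\<^sub>R (b + 0) \<in> C" unfolding C_def using tb by (intro mem_cone_hull) auto
    then have kC: "k \<in> C" using tb by simp
    have "\<forall>x'. \<exists>l'>0. \<forall>l\<in>{0..l'}. k + l *\<^sub>R x' \<in> C"
    proof
      fix x'
      obtain l'' where l'': "l'' > 0" "\<forall>l\<in>{0..l''}. l *\<^sub>R x' \<in> V" using core0 by blast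
      show "\<exists>l'>0. \<forall>l\<in>{0..l'}. k + l *\<^sub>R x' \<in> C"
      proof (intro exI[of _ "t * l''"] conjI ballI)
        show "t * l'' > 0" using tb l'' by simp
        fix l assume l: "l \<in> {0..t * l''}"
        then have "l / t \<in> {0..l''}" using tb by (auto simp: field_simps)
        then have "(l/t) *\<^sub>R x' \<in> V" using l'' by blast
        then have "b + (l/t) *\<^sub>R x' \<in> D" using tb unfolding D_def by blast
        then have "t *\<^sub>R (b + (l/t) *\<^sub>R x') \<in> C" unfolding C_def using tb by (intro mem_cone_hull) auto
        moreover have "t *\<^sub>R (b + (l/t) *\<^sub>R x') = k + l *\<^sub>R x'" using tb by (simp add: scaleR_add_right)
        ultimately show "k + l *\<^sub>R x' \<in> C" by simp
      qed
    qed
    then show "k \<in> cor C" using kC unfolding cor_def by blast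
  qed
  show ?thesis unfolding VH_solution_def
    using x0 cC coC pointed core effC by (intro conjI exI[of _ C]) auto
qed


lemma part5:
  fixes f :: "'z::real_vector \<Rightarrow> 'x::real_vector"
  assumes "cone K" "K \<noteq> {}" "VH_solution f \<Omega> K x0"
  shows "BeV_proper f \<Omega> K x0"
proof -
  let ?I = "img_shift f \<Omega> x0"
  let ?S = "cone hull {y + k | y k. y \<in> ?I \<and> k \<in> K}"
  obtain C where C: "convex C" "cone C" "C \<inter> uminus ` C = {0}" "K - {0} \<subseteq> cor C"
    and eff: "efficient_wrt f \<Omega> C x0" and x0: "x0 \<in> \<Omega>"
    using assms(3) unfolding VH_solution_def by blast
  have effI: "?I \<inter> uminus ` C = {0}" using eff unfolding efficient_wrt_def by blast
  have addC: "a + b \<in> C" if "a \<in> C" "b \<in> C" for a b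
    using C(1,2) that convex_cone by blast
  have C0: "0 \<in> C" using C(3) by blast
  have K0: "0 \<in> K" using assms(1,2) cone_contains_0 by blast
  have KC: "K \<subseteq> C" using C(4) C0 cor_def by blast
  have ptd: "a = 0" if "a \<in> C" "-a \<in> C" for a
  proof -
    have "a \<in> uminus ` C" using that(2) by (metis image_eqI minus_minus)
    then show ?thesis using that(1) C(3) by blast
  qed
  have main: "z = 0" if z: "z \<in> vcl ?S" "z \<in> uminus ` K" for z
  proof (rule ccontr)
    assume zn: "z \<noteq> 0"
    obtain k where k: "k \<in> K" "z = -k" using z(2) by blast
    have kn: "k \<noteq> 0" using k zn by simp
    have k2: "(1/2) *\<^sub>R k \<in> K - {0}" using k kn assms(1) by (auto intro: mem_cone)
    obtain x where x: "\<forall>l'>0. \<exists>l\<in>{0..l'}. z + l *\<^sub>R x \<in> ?S" using z(1) unfolding vcl_def by blast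
    have "(1/2) *\<^sub>R k \<in> cor C" using k2 C(4) by blast
    then obtain l1 where l1: "l1 > 0" "\<forall>l\<in>{0..l1}. (1/2) *\<^sub>R k + l *\<^sub>R (-x) \<in> C"
      unfolding cor_def by blast
    obtain l where l: "l \<in> {0..l1}" "z + l *\<^sub>R x \<in> ?S" using x l1(1) by blast
    define w where "w = z + l *\<^sub>R x"
    define c where "c = (1/2) *\<^sub>R k + l *\<^sub>R (-x)"
    have cC: "c \<in> C" using l1 l(1) c_def by blast
    have "-w = (1/2) *\<^sub>R k + c" unfolding w_def c_def k(2)
    proof -
      have "k = (1/2) *\<^sub>R k + (1/2) *\<^sub>R k" by (simp add: scaleR_add_left[symmetric])
      then show "- (- k + l *\<^sub>R x) = (1/2) *\<^sub>R k + ((1/2) *\<^sub>R k + l *\<^sub>R (-x))"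
        by (simp add: algebra_simps)
    qed
    also have "\<dots> \<in> C" using addC cC k2 KC by blast
    finally have mw: "-w \<in> C" .
    obtain t y k' where tyk: "w = t *\<^sub>R (y + k')" "t \<ge> 0" "y \<in> ?I" "k' \<in> K"
      using l(2) unfolding w_def[symmetric] cone_hull_expl by blast
    have wC: "w \<in> C"
    proof (cases "t = 0")
      case True then show ?thesis using tyk C0 by simp
    next
      case False
      then have t: "t > 0" using tyk by simp
      have "- (t *\<^sub>R y) = -w + t *\<^sub>R k'" using tyk by (simp add: algebra_simps)
      also have "\<dots> \<in> C" using addC mw tyk KC C(2) mem_cone by blast
      finally have "(1/t) *\<^sub>R (- (t *\<^sub>R y)) \<in> C" using C(2) t by (intro mem_cone) auto
      then have "-y \<in> C" using t by simp
      then have "y \<in> uminus ` C" by (metis image_eqI minus_minus)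
      then have "y = 0" using tyk(3) effI by blast
      then have "w = t *\<^sub>R k'" using tyk by simp
      then show ?thesis using tyk KC C(2) mem_cone by blast
    qed
    have "w = 0" using ptd wC mw by blast
    then have "(1/2) *\<^sub>R k + c = 0" using \<open>-w = (1/2) *\<^sub>R k + c\<close> by simp
    then have "c = - ((1/2) *\<^sub>R k)" by (metis add.commute add_eq_0_iff)
    then have "(1/2) *\<^sub>R k = 0" using ptd[of "(1/2) *\<^sub>R k"] cC k2 KC by auto
    then show False using kn by simp
  qed
  have "0 \<in> ?S"
  proof -
    have "0 \<in> ?I" using x0 unfolding img_shift_def by force
    then have "(0::'x) + 0 \<in> {y + k | y k. y \<in> ?I \<and> k \<in> K}" using K0 by blast
    then show ?thesis using cone_hull_contains_0 by fastforce
  qed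
  moreover have "0 \<in> uminus ` K" using K0 by force
  ultimately show ?thesis using x0 vcl_sup main unfolding BeV_proper_def by blast
qed

theorem theorem4p14:
  fixes f :: "'z::real_vector \<Rightarrow> 'x::real_vector"
    and \<Omega> :: "'z set" and K B :: "'x set"
  assumes "\<Omega> \<noteq> {}"
    and "cone K" and "convex K" and "K \<noteq> {}" and "nontrivial_cone K"
    and "is_base K B" and "convex B"
  shows "(\<forall>x0. BeV_proper f \<Omega> K x0 \<longrightarrow> efficient_wrt f \<Omega> K x0)
    \<and> (\<forall>x0. HuV_proper f \<Omega> K x0 \<longrightarrow> BeV_proper f \<Omega> K x0)
    \<and> (convex {y + k | y k. y \<in> f ` \<Omega> \<and> k \<in> K} \<longrightarrow>
         (\<forall>x0. BeV_proper f \<Omega> K x0 \<longrightarrow> HuV_proper f \<Omega> K x0))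
    \<and> (\<forall>x0. VP_solution f \<Omega> B x0 \<longrightarrow> VH_solution f \<Omega> K x0)
    \<and> (\<forall>x0. VH_solution f \<Omega> K x0 \<longrightarrow> BeV_proper f \<Omega> K x0)"
  using part1[OF assms(2,4)] part2[OF assms(2,4)] part3[OF assms(2,4)]
    part4[OF assms(6,7)] part5[OF assms(2,4)] by blast

end
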